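(* Let $n=p_1^{\alpha_1}\cdots p_r^{\alpha_r}$ be the canonical factorization of $n$ into distinct primes and let $d=p_1^{\beta_1}\cdots p_r^{\beta_r}$ be a square-free divisor of $n$ (i.e. $0\le\beta_\ell\le1$ for all $\ell$). Then $c_d(k)\neq0$ for every divisor $k$ of $n$, and for $s=0,1,2,\dots$, $$\sum_{k\mid n}\frac{1}{\big(c_d(k)\big)^s}=\prod_{\ell=1}^r\Big(\frac{\alpha_\ell}{(p_\ell-1)^{\beta_\ell s}}+(-1)^{\beta_\ell s}\Big).$$
   Context: For integers $m\ge1$ and $x$, $c_m(x)=\sum_{1\le j\le m,\ (j,m)=1}e^{2\pi ijx/m}$ is the Ramanujan sum; the sum is over positive divisors $k$ of $n$. *)

theory Defs
  imports "HOL-Computational_Algebra.Computational_Algebra"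
begin

definition ramanujan_sum :: "nat \<Rightarrow> int \<Rightarrow> complex" where
  "ramanujan_sum m x =
     (\<Sum>j\<in>{j\<in>{1..m}. coprime j m}.
        exp (2 * of_real pi * \<i> * of_nat j * of_int x / of_nat m))"

end

theory Submission
  imports Defs "HOL-Analysis.Complex_Transcendental" "HOL-Number_Theory.Number_Theory"
begin

definition ee :: "nat \<Rightarrow> int \<Rightarrow> complex" where
  "ee m y = exp (2 * of_real pi * \<i> * of_int y / of_nat m)"

lemma exp_2pi_int: "exp (2 * of_real pi * \<i> * of_int t) = 1"
proof -
  have "exp (2 * of_real pi * \<i> * of_int t) = exp ((2 * of_int t * pi) * \<i>)"
    by (simp add: algebra_simps)
  also have "\<dots> = 1" by (rule exp_integer_2pi) simp
  finally show ?thesis .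
qed

lemma ee_period:
  assumes "m > 0" "int m dvd a - b"
  shows "ee m a = ee m b"
proof -
  obtain t where t: "a = b + int m * t" using assms(2) by (metis dvd_def diff_eq_eq add.commute)
  have "2 * of_real pi * \<i> * of_int a / of_nat m =
        2 * of_real pi * \<i> * of_int b / of_nat m + 2 * of_real pi * \<i> * of_int t"
    using assms(1) by (simp add: t field_simps)
  then show ?thesis unfolding ee_def by (simp add: exp_add exp_2pi_int)
qed

lemma rs_alt: "ramanujan_sum m x = (\<Sum>j\<in>totatives m. ee m (int j * x))"
proof -
  have "{j\<in>{1..m}. coprime j m} = totatives m" by (auto simp: in_totatives_iff)
  then show ?thesis unfolding ramanujan_sum_def ee_def by (simp add: mult.assoc)
qed

lemma rs_prime:
  assumes p: "prime p"
  shows "ramanujan_sum p x = (if int p dvd x then of_nat p - 1 else -1)"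
proof -
  have p0: "p > 0" using p prime_gt_0_nat by blast
  have tot: "totatives p = {0<..<p}" using p by (rule totatives_prime)
  show ?thesis
  proof (cases "int p dvd x")
    case True
    have "\<And>j. ee p (int j * x) = 1"
    proof -
      fix j
      have "ee p (int j * x) = ee p 0" using True p0 by (intro ee_period) auto
      then show "ee p (int j * x) = 1" by (simp add: ee_def)
    qed
    then show ?thesis using True p0 by (simp add: rs_alt tot of_nat_diff)
  next
    case False
    define z where "z = ee p x"
    have zj: "ee p (int j * x) = z ^ j" for j
    proof -
      have "ee p (int j * x) = exp (of_nat j * (2 * of_real pi * \<i> * of_int x / of_nat p))"
        unfolding ee_def by (simp add: mult_ac)
      then show ?thesis unfolding z_def ee_def by (simp only: exp_of_nat_mult)
    qed
    have zp: "z ^ p = 1"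
    proof -
      have "z ^ p = ee p (int p * x)" by (simp add: zj)
      also have "\<dots> = ee p 0" using p0 by (intro ee_period) auto
      finally show ?thesis by (simp add: ee_def)
    qed
    have z1: "z \<noteq> 1"
    proof
      assume "z = 1"
      then obtain n :: int where n: "Im (2 * of_real pi * \<i> * of_int x / of_nat p) = of_int (2 * n) * pi"
        unfolding z_def ee_def exp_eq_1 by blast
      have "2 * pi * x / p = 2 * n * pi" using n by simp
      then have "real_of_int x = real_of_int (n * int p)" using p0 pi_gt_zero by (simp add: field_simps)
      then have "x = n * p" by (simp only: of_int_eq_iff)
      then have "int p dvd x" by simp
      with False show False by simp
    qed
    have "(\<Sum>j<p. z ^ j) = 0" using z1 zp by (simp add: sum_gp_strict)
    moreover have "{..<p} = insert 0 {0<..<p}" using p0 by auto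
    ultimately have "(\<Sum>j\<in>{0<..<p}. z ^ j) = -1"
      by (simp add: sum.insert) (metis add_eq_0_iff add.commute)
    then show ?thesis using False by (simp add: rs_alt tot zj)
  qed
qed

lemma ee_mult:
  assumes "m > 0" "n > 0"
  shows "ee m a * ee n b = ee (m*n) (a * int n + b * int m)"
proof -
  have "2 * of_real pi * \<i> * of_int a / of_nat m + 2 * of_real pi * \<i> * of_int b / of_nat n
      = 2 * of_real pi * \<i> * of_int (a * int n + b * int m) / (of_nat (m*n) :: complex)"
    using assms by (simp add: field_simps)
  then show ?thesis unfolding ee_def by (simp add: exp_add[symmetric])
qed

lemma mod_dvd_aux: "int m dvd int (j mod m) * y - int j * y"
proof -
  have "int j = int (j mod m + m * (j div m))" by simp
  then have "int j = int (j mod m) + int m * int (j div m)" by (simp only: of_nat_add of_nat_mult)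
  then have "int (j mod m) * y - int j * y = int m * (- (int (j div m) * y))"
    by (simp add: algebra_simps)
  then show ?thesis by simp
qed

lemma rs_mult:
  assumes "m > 1" "n > 1" "coprime m n"
  shows "\<exists>u v. coprime u m \<and> coprime v n \<and>
     (\<forall>x. ramanujan_sum (m*n) x = ramanujan_sum m (int u * x) * ramanujan_sum n (int v * x))"
proof -
  obtain u where u: "[n * u = 1] (mod m)"
    using cong_solve_coprime_nat[of n m] assms(3) by (auto simp: coprime_commute)
  obtain v where v: "[m * v = 1] (mod n)"
    using cong_solve_coprime_nat[of m n] assms(3) by auto
  have cu: "coprime u m"
    by (metis coprime_1_left coprime_mult_left_iff cong_imp_coprime cong_sym u)
  have cv: "coprime v n"
    by (metis coprime_1_left coprime_mult_left_iff cong_imp_coprime cong_sym v)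
  define w where "w = n * u + m * v"
  have w1: "[w = 1] (mod m)"
  proof -
    have "[n * u + m * v = 1 + 0] (mod m)"
      by (intro cong_add u) (simp add: cong_def)
    then show ?thesis by (simp add: w_def)
  qed
  have w2: "[w = 1] (mod n)"
  proof -
    have "[m * v + n * u = 1 + 0] (mod n)"
      by (intro cong_add v) (simp add: cong_def)
    then show ?thesis by (simp add: w_def add.commute)
  qed
  have w: "[w = 1] (mod m * n)" using w1 w2 assms(3) by (rule coprime_cong_mult_nat)
  then have wd: "int (m*n) dvd int w - 1"
    by (metis cong_int_iff cong_iff_dvd_diff of_nat_1 of_nat_mult)
  have m0: "m > 0" "n > 0" using assms by auto
  show ?thesis
  proof (intro exI conjI allI)
    fix x :: int
    define g where "g = (\<lambda>(a::nat, b::nat). ee m (int a * (int u * x)) * ee n (int b * (int v * x)))"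
    have step: "ee (m*n) (int j * x) = g (j mod m, j mod n)" for j
    proof -
      have "g (j mod m, j mod n) = ee m (int j * (int u * x)) * ee n (int j * (int v * x))"
        unfolding g_def
      proof (simp only: prod.case, intro arg_cong2[where f="(*)"])
        show "ee m (int (j mod m) * (int u * x)) = ee m (int j * (int u * x))"
          using m0 by (intro ee_period)
             (simp_all add: mod_dvd_aux)
        show "ee n (int (j mod n) * (int v * x)) = ee n (int j * (int v * x))"
          using m0 by (intro ee_period)
             (simp_all add: mod_dvd_aux)
      qed
      also have "\<dots> = ee (m*n) (int j * (int u * x) * int n + int j * (int v * x) * int m)"
        using m0 by (rule ee_mult)
      also have "\<dots> = ee (m*n) (int j * x)"
      proof (rule ee_period)
        show "0 < m * n" using m0 by simp
        have "int j * (int u * x) * int n + int j * (int v * x) * int m - int j * x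
              = int j * x * (int w - 1)" by (simp add: w_def algebra_simps)
        then show "int (m * n) dvd int j * (int u * x) * int n + int j * (int v * x) * int m - int j * x"
          using wd by simp
      qed
      finally show ?thesis by simp
    qed
    have "ramanujan_sum (m*n) x = (\<Sum>j\<in>totatives (m*n). g (j mod m, j mod n))"
      by (simp add: rs_alt step)
    also have "\<dots> = (\<Sum>ab\<in>totatives m \<times> totatives n. g ab)"
      using sum.reindex_bij_betw[OF bij_betw_totatives[OF assms], of g] by simp
    also have "\<dots> = (\<Sum>a\<in>totatives m. ee m (int a * (int u * x))) * (\<Sum>b\<in>totatives n. ee n (int b * (int v * x)))"
      by (simp add: g_def sum_product sum.cartesian_product)
    also have "\<dots> = ramanujan_sum m (int u * x) * ramanujan_sum n (int v * x)"
      by (simp add: rs_alt)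
    finally show "ramanujan_sum (m*n) x = ramanujan_sum m (int u * x) * ramanujan_sum n (int v * x)" .
  qed (use cu cv in auto)
qed

lemma rs_1: "ramanujan_sum 1 x = 1"
  by (simp add: rs_alt ee_def exp_2pi_int)

lemma dvd_coprime_mult_iff:
  assumes "coprime u p"
  shows "int p dvd int u * x \<longleftrightarrow> int p dvd x"
proof -
  have "coprime (int p) (int u)" using assms by (simp add: coprime_commute)
  then show ?thesis by (simp add: coprime_dvd_mult_right_iff)
qed

lemma rs_prod_primes:
  assumes "finite P" "\<forall>p\<in>P. prime p"
  shows "\<forall>x. ramanujan_sum (\<Prod>P) x = (\<Prod>p\<in>P. if int p dvd x then of_nat p - 1 else -1)"
  using assms
proof (induction P rule: finite_induct)
  case empty
  then show ?case using rs_1 by simp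
next
  case (insert p F)
  have pp: "prime p" using insert by simp
  show ?case
  proof (cases "F = {}")
    case True
    then show ?thesis using pp by (simp add: rs_prime)
  next
    case False
    then obtain q where q: "q \<in> F" by blast
    have qp: "prime q" using q insert by simp
    have D0: "\<Prod>F > (0::nat)" by (rule prod_pos) (use insert in \<open>auto simp: prime_gt_0_nat\<close>)
    have IH: "\<forall>x. ramanujan_sum (\<Prod>F) x = (\<Prod>p\<in>F. if int p dvd x then of_nat p - 1 else -1)"
      using insert by blast
    have "q dvd \<Prod>F" using dvd_prodI[OF insert(1) q, of "\<lambda>x. x"] by simp
    then have "q \<le> \<Prod>F" using D0 by (rule dvd_imp_le)
    then have D1: "\<Prod>F > (1::nat)" using qp prime_gt_1_nat by (metis less_le_trans)
    have p1: "p > 1" using pp prime_gt_1_nat by blast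
    have cop: "coprime p (\<Prod>F)"
    proof (rule prod_coprime_right)
      fix r assume "r \<in> F"
      then have "prime r" "r \<noteq> p" using insert by auto
      then show "coprime p r" using pp by (simp add: primes_coprime)
    qed
    obtain u v where uv: "coprime u p" "coprime v (\<Prod>F)"
      "\<And>x. ramanujan_sum (p * \<Prod>F) x = ramanujan_sum p (int u * x) * ramanujan_sum (\<Prod>F) (int v * x)"
      using rs_mult[OF p1 D1 cop] by blast
    show ?thesis
    proof
      fix x
      have vr: "coprime v r" if "r \<in> F" for r
      proof -
        have "r dvd \<Prod>F" using dvd_prodI[OF insert(1) that, of "\<lambda>x. x"] by simp
        then show ?thesis using uv(2) coprime_imp_coprime dvd_trans by blast
      qed
      have "ramanujan_sum (\<Prod>(insert p F)) x = ramanujan_sum p (int u * x) * ramanujan_sum (\<Prod>F) (int v * x)"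
        using insert(1,2) uv(3) by simp
      also have "\<dots> = (if int p dvd x then of_nat p - 1 else -1) *
          (\<Prod>r\<in>F. if int r dvd int v * x then of_nat r - 1 else -1)"
        using pp by (simp only: IH rs_prime dvd_coprime_mult_iff[OF uv(1)])
      also have "(\<Prod>r\<in>F. if int r dvd int v * x then of_nat r - 1 else -1) =
                 (\<Prod>r\<in>F. if int r dvd x then of_nat r - 1 else (-1::complex))"
        by (intro prod.cong refl) (simp add: dvd_coprime_mult_iff[OF vr])
      finally show "ramanujan_sum (\<Prod>(insert p F)) x = (\<Prod>r\<in>insert p F. if int r dvd x then of_nat r - 1 else -1)"
        using insert(1,2) by simp
    qed
  qed
qed

lemma mult_other:
  fixes p q r :: nat
  assumes "prime p" "prime q" "q \<noteq> p" "r > 0"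
  shows "multiplicity q (p ^ e * r) = multiplicity q r"
proof -
  have "p ^ e \<noteq> 0" using assms(1) by (simp add: prime_gt_0_nat)
  then have "multiplicity q (p ^ e * r) = multiplicity q (p ^ e) + multiplicity q r"
    using assms by (intro prime_elem_multiplicity_mult_distrib) auto
  then show ?thesis using assms multiplicity_distinct_prime_power[of q p e] by simp
qed

lemma divsum:
  fixes F :: "nat \<Rightarrow> nat \<Rightarrow> complex" and n :: nat
  assumes "n > 0"
  shows "\<forall>Q. finite Q \<longrightarrow> prime_factors n \<subseteq> Q \<longrightarrow> (\<forall>q\<in>Q. prime q) \<longrightarrow>
     (\<Sum>k\<in>{k. k dvd n}. \<Prod>q\<in>Q. F q (multiplicity q k)) = (\<Prod>q\<in>Q. \<Sum>e\<le>multiplicity q n. F q e)"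
  using assms
proof (induction n rule: less_induct)
  case (less n)
  show ?case
  proof (cases "n = 1")
    case True
    have "{k. k dvd n} = {1}" using True by auto
    then show ?thesis using True by simp
  next
    case False
    then obtain p where pp: "prime p" "p dvd n" using prime_factor_nat by blast
    define a where "a = multiplicity p n"
    define m where "m = n div p ^ a"
    have n0: "n \<noteq> 0" using less by simp
    have nm: "n = p ^ a * m" unfolding m_def a_def using multiplicity_dvd[of p n] by simp
    have pm: "\<not> p dvd m" unfolding m_def a_def by (rule multiplicity_decompose) (use n0 pp in auto)
    have a1: "a > 0" unfolding a_def using pp n0 prime_multiplicity_gt_zero_iff by blast
    have m0: "m > 0" using nm n0 by (cases m) auto
    have pa: "p ^ a > 1" using a1 prime_gt_1_nat[OF pp(1)] by (metis one_less_power)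
    have mless: "m < n" using nm pa m0 by simp
    show ?thesis
    proof (intro allI impI)
      fix Q :: "nat set"
      assume Q: "finite Q" "prime_factors n \<subseteq> Q" "\<forall>q\<in>Q. prime q"
      have pQ: "p \<in> Q" using Q(2) pp n0 by (auto simp: in_prime_factors_iff)
      have Q': "prime_factors m \<subseteq> Q - {p}"
      proof
        fix q assume "q \<in> prime_factors m"
        then have "prime q" "q dvd m" using m0 by (auto simp: in_prime_factors_iff)
        then have "q dvd n" "q \<noteq> p" using nm pm by auto
        then show "q \<in> Q - {p}" using Q(2) n0 \<open>prime q\<close> by (auto simp: in_prime_factors_iff)
      qed
      have IH: "(\<Sum>k\<in>{k. k dvd m}. \<Prod>q\<in>Q-{p}. F q (multiplicity q k)) = (\<Prod>q\<in>Q-{p}. \<Sum>e\<le>multiplicity q m. F q e)"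
        using less.IH[OF mless m0] Q Q' by blast
      define g where "g = (\<lambda>k. \<Prod>q\<in>Q. F q (multiplicity q k))"
      define G where "G = (\<lambda>k. \<Prod>q\<in>Q-{p}. F q (multiplicity q k))"
      have multp: "multiplicity p (p ^ e * r) = e" if "r dvd m" for e r
      proof -
        have r0: "r \<noteq> 0" using that m0 by auto
        have "\<not> p dvd r" using that pm dvd_trans by blast
        then have "multiplicity p r = 0" by (rule not_dvd_imp_multiplicity_0)
        moreover have "multiplicity p (p ^ e * r) = multiplicity p (p ^ e) + multiplicity p r"
          using pp r0 by (intro prime_elem_multiplicity_mult_distrib) (auto simp: prime_gt_0_nat)
        ultimately show ?thesis using pp by simp
      qed
      have "(\<Sum>k\<in>{k. k dvd n}. g k) = (\<Sum>er\<in>{..a} \<times> {k. k dvd m}. g (p ^ fst er * snd er))"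
      proof (rule sum.reindex_bij_witness[where j = "\<lambda>k. (multiplicity p k, k div p ^ multiplicity p k)"
              and i = "\<lambda>er. p ^ fst er * snd er"])
        fix k assume "k \<in> {k. k dvd n}"
        show "p ^ fst (multiplicity p k, k div p ^ multiplicity p k) * snd (multiplicity p k, k div p ^ multiplicity p k) = k"
          using multiplicity_dvd[of p k] by simp
        then show "g (p ^ fst (multiplicity p k, k div p ^ multiplicity p k) * snd (multiplicity p k, k div p ^ multiplicity p k)) = g k"
          by simp
        have kn: "k dvd n" using \<open>k \<in> {k. k dvd n}\<close> by simp
        have "multiplicity p k \<le> a" unfolding a_def using kn n0 by (rule dvd_imp_multiplicity_le)
        moreover have "k div p ^ multiplicity p k dvd m"
        proof -
          define r where "r = k div p ^ multiplicity p k"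
          have "\<not> p dvd r" unfolding r_def by (rule multiplicity_decompose) (use kn n0 pp in auto)
          then have "coprime r p" using pp by (simp add: prime_imp_coprime coprime_commute)
          then have cr: "coprime r (p ^ a)" by simp
          have "r dvd k" unfolding r_def using multiplicity_dvd[of p k] by (metis dvd_div_mult_self dvd_triv_left)
          then have "r dvd p ^ a * m" using kn nm dvd_trans by metis
          then show ?thesis using cr unfolding r_def[symmetric] by (simp add: coprime_dvd_mult_right_iff)
        qed
        ultimately show "(multiplicity p k, k div p ^ multiplicity p k) \<in> {..a} \<times> {k. k dvd m}" by simp
      next
        fix er assume er: "er \<in> {..a} \<times> {k. k dvd m}"
        obtain e r where err: "er = (e, r)" by (cases er)
        have ea: "e \<le> a" and rm: "r dvd m" using er err by auto
        have "p ^ e > 0" using pp by (simp add: prime_gt_0_nat)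
        then show "(multiplicity p (p ^ fst er * snd er), p ^ fst er * snd er div p ^ multiplicity p (p ^ fst er * snd er)) = er"
          using multp[OF rm] err by simp
        have "p ^ e dvd p ^ a" using ea by (rule le_imp_power_dvd)
        then have "p ^ e * r dvd p ^ a * m" using rm by (rule mult_dvd_mono)
        then show "p ^ fst er * snd er \<in> {k. k dvd n}" using err nm by simp
      qed
      also have "\<dots> = (\<Sum>er\<in>{..a} \<times> {k. k dvd m}. F p (fst er) * G (snd er))"
      proof (rule sum.cong[OF refl])
        fix er assume er: "er \<in> {..a} \<times> {k. k dvd m}"
        obtain e r where err: "er = (e, r)" by (cases er)
        have rm: "r dvd m" using er err by auto
        have r0: "r > 0" using rm m0 by (cases r) auto
        have "g (p ^ e * r) = F p (multiplicity p (p ^ e * r)) * (\<Prod>q\<in>Q-{p}. F q (multiplicity q (p ^ e * r)))"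
          unfolding g_def using Q(1) pQ by (simp add: prod.remove)
        also have "(\<Prod>q\<in>Q-{p}. F q (multiplicity q (p ^ e * r))) = G r"
          unfolding G_def using Q(3) pp r0 by (intro prod.cong refl) (simp add: mult_other)
        finally show "g (p ^ fst er * snd er) = F p (fst er) * G (snd er)"
          using err multp[OF rm] by simp
      qed
      also have "\<dots> = (\<Sum>e\<le>a. F p e) * (\<Sum>r\<in>{k. k dvd m}. G r)"
        by (simp add: sum_product sum.cartesian_product case_prod_beta')
      also have "(\<Sum>r\<in>{k. k dvd m}. G r) = (\<Prod>q\<in>Q-{p}. \<Sum>e\<le>multiplicity q n. F q e)"
        unfolding G_def IH
        using Q(3) pp m0 nm by (intro prod.cong refl) (simp add: mult_other)
      also have "(\<Sum>e\<le>a. F p e) * (\<Prod>q\<in>Q-{p}. \<Sum>e\<le>multiplicity q n. F q e) =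
                 (\<Prod>q\<in>Q. \<Sum>e\<le>multiplicity q n. F q e)"
        using Q(1) pQ by (simp add: prod.remove a_def)
      finally show "(\<Sum>k\<in>{k. k dvd n}. \<Prod>q\<in>Q. F q (multiplicity q k)) = (\<Prod>q\<in>Q. \<Sum>e\<le>multiplicity q n. F q e)"
        unfolding g_def .
    qed
  qed
qed

lemma inv_minus_one_pow: "1 / (-1::complex) ^ s = (-1) ^ s"
  by (metis power_one_over divide_minus1 div_by_1)

theorem mainTheorem9:
  fixes n d :: nat
  assumes "n > 0" and "squarefree d" and "d dvd n"
  shows "(\<forall>k. k dvd n \<longrightarrow> ramanujan_sum d (int k) \<noteq> 0) \<and>
         (\<forall>s::nat. (\<Sum>k\<in>{k. k dvd n}. 1 / (ramanujan_sum d (int k)) ^ s) =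
            (\<Prod>p\<in>prime_factors n.
               of_nat (multiplicity p n) / (of_nat p - 1) ^ (multiplicity p d * s)
               + (-1) ^ (multiplicity p d * s)))"
proof -
  define P where "P = prime_factors d"
  define Q where "Q = prime_factors n"
  have d0: "d > 0" using assms by (cases d) auto
  have mult1: "multiplicity p d = 1" if "p \<in> P" for p
    using assms(2) d0 that unfolding P_def by (simp add: squarefree_factorial_semiring')
  have dprod: "d = \<Prod>P"
  proof -
    have "d = (\<Prod>p\<in>P. p ^ multiplicity p d)" unfolding P_def using d0 by (rule prime_factorization_nat)
    also have "\<dots> = \<Prod>P" by (intro prod.cong refl) (simp add: mult1)
    finally show ?thesis .
  qed
  have Pprime: "\<forall>p\<in>P. prime p" unfolding P_def by auto
  have PQ: "P \<subseteq> Q" unfolding P_def Q_def using assms d0 by (auto simp: in_prime_factors_iff intro: dvd_trans)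
  have cd: "ramanujan_sum d (int k) = (\<Prod>p\<in>P. if p dvd k then of_nat p - 1 else -1)" for k
    using rs_prod_primes[OF _ Pprime] dprod unfolding P_def by simp
  have fnz: "(if p dvd k then of_nat p - 1 else -1 :: complex) \<noteq> 0" if "p \<in> P" for p k
  proof -
    have "p > 1" using that Pprime prime_gt_1_nat by blast
    then have "(of_nat p :: complex) \<noteq> 1" by simp
    then show ?thesis by simp
  qed
  have part1: "ramanujan_sum d (int k) \<noteq> 0" for k
    unfolding cd by (simp add: P_def fnz[unfolded P_def])
  show ?thesis
  proof (intro conjI allI impI)
    fix k show "ramanujan_sum d (int k) \<noteq> 0" by (rule part1)
  next
    fix s :: nat
    define F :: "nat \<Rightarrow> nat \<Rightarrow> complex" where "F = (\<lambda>q e. if q \<in> P then (if e > 0 then 1 / (of_nat q - 1) ^ s else (-1) ^ s) else (1::complex))"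
    have lhs: "1 / (ramanujan_sum d (int k)) ^ s = (\<Prod>q\<in>Q. F q (multiplicity q k))" if "k dvd n" for k
    proof -
      have k0: "k \<noteq> 0" using that assms(1) by auto
      have "1 / (ramanujan_sum d (int k)) ^ s = (\<Prod>p\<in>P. 1 / (if p dvd k then of_nat p - 1 else -1) ^ s)"
        unfolding cd by (simp add: prod_dividef prod_power_distrib)
      also have "\<dots> = (\<Prod>q\<in>P. F q (multiplicity q k))"
      proof (intro prod.cong refl)
        fix q assume q: "q \<in> P"
        have "multiplicity q k > 0 \<longleftrightarrow> q dvd k"
          using q Pprime k0 by (intro prime_multiplicity_gt_zero_iff) auto
        then show "1 / (if q dvd k then of_nat q - 1 else -1) ^ s = F q (multiplicity q k)"
          using q by (auto simp: F_def inv_minus_one_pow)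
      qed
      also have "\<dots> = (\<Prod>q\<in>Q. F q (multiplicity q k))"
        by (rule prod.mono_neutral_left) (use PQ in \<open>auto simp: Q_def F_def\<close>)
      finally show ?thesis .
    qed
    have "(\<Sum>k\<in>{k. k dvd n}. 1 / (ramanujan_sum d (int k)) ^ s) = (\<Sum>k\<in>{k. k dvd n}. \<Prod>q\<in>Q. F q (multiplicity q k))"
      by (intro sum.cong refl) (simp add: lhs)
    also have "\<dots> = (\<Prod>q\<in>Q. \<Sum>e\<le>multiplicity q n. F q e)"
      using divsum[OF assms(1), of F] unfolding Q_def by auto
    also have "\<dots> = (\<Prod>p\<in>Q. of_nat (multiplicity p n) / (of_nat p - 1) ^ (multiplicity p d * s)
               + (-1) ^ (multiplicity p d * s))"
    proof (intro prod.cong refl)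
      fix q assume q: "q \<in> Q"
      have qp: "prime q" using q unfolding Q_def by auto
      have "{..multiplicity q n} = insert 0 {1..multiplicity q n}" by auto
      then have "(\<Sum>e\<le>multiplicity q n. F q e) = F q 0 + (\<Sum>e\<in>{1..multiplicity q n}. F q e)"
        by simp
      also have "(\<Sum>e\<in>{1..multiplicity q n}. F q e) = (\<Sum>e\<in>{1..multiplicity q n}. F q 1)"
        by (intro sum.cong refl) (simp add: F_def)
      also have "\<dots> = of_nat (multiplicity q n) * F q 1" by simp
      finally have eq: "(\<Sum>e\<le>multiplicity q n. F q e) = F q 0 + of_nat (multiplicity q n) * F q 1" .
      show "(\<Sum>e\<le>multiplicity q n. F q e) = of_nat (multiplicity q n) / (of_nat q - 1) ^ (multiplicity q d * s)
               + (-1) ^ (multiplicity q d * s)"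
      proof (cases "q \<in> P")
        case True
        then show ?thesis using eq mult1[OF True] by (simp add: F_def)
      next
        case False
        then have "\<not> q dvd d" using qp d0 unfolding P_def by (auto simp: in_prime_factors_iff)
        then have "multiplicity q d = 0" by (rule not_dvd_imp_multiplicity_0)
        then show ?thesis using eq False by (simp add: F_def)
      qed
    qed
    finally show "(\<Sum>k\<in>{k. k dvd n}. 1 / (ramanujan_sum d (int k)) ^ s) =
            (\<Prod>p\<in>prime_factors n.
               of_nat (multiplicity p n) / (of_nat p - 1) ^ (multiplicity p d * s)
               + (-1) ^ (multiplicity p d * s))" unfolding Q_def .
  qed
qed

end
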